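(* For any pair of distinct letters $a,b\in V\Psi$, the vertex rim of $\mathrm{Fan}(a,b)$ is a reduced word in the letters of $V\Psi$, and the edge-rim of $\mathrm{Fan}(a,b)$ is a reduced word in the letters $\{x_e\}_{e\in E\Psi}$.
   Context: Let $(\Psi,\lambda)$ be a LOG presentation: $\Psi$ is a directed graph, with $\partial_-e,\partial_+e$ the initial and terminal vertices of $e\in E\Psi$, and $\lambda:E\Psi\to V\Psi$ is a labeling. The group $G(\Psi,\lambda)$ has generating set $V\Psi$ and relations $r_e=(\lambda e)(\partial_+e)(\lambda e)^{-1}(\partial_-e)^{-1}$, $e\in E\Psi$. Let $P(\Psi,\lambda)$ be the presentation 2-complex (single vertex $\ast$, one unit square cell $C_e$ per relation), and let $h:G(\Psi,\lambda)\to\mathbb{Z}$ be the epimorphism sending every generator to $1$, extended to a Morse function. For $e\in E\Psi$, $x_e\in\ker(h)$ denotes the element with $\partial_-e\cdot x_e=\lambda e$ (represented by the diagonal of $C_e$ at the middle level). $C_e^+$ is $C_e$ oriented so that its boundary reads $(\lambda e)(\partial_+e)(\lambda e)^{-1}(\partial_-e)^{-1}$, $C_e^-$ the reverse orientation; the vertex rims are $(\partial_-e)^{-1}(\lambda e)$ for $C_e^+$ and $(\lambda e)^{-1}(\partial_-e)$ for $C_e^-$, and the edge rims are $x_e^{\pm1}$ respectively. The link $\mathrm{Lk}(\ast,P(\Psi,\lambda))$ is the graph on vertices $v^\pm$, $v\in V\Psi$, with $u^{\epsilon_1},v^{\epsilon_2}$ adjacent iff some cell $C_e$ has adjacent edges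 $f,g$ labeled $u,v$ with $\partial_{\epsilon_1}f=\partial_{\epsilon_2}g$; the descending link is the full subgraph on $\{v^+\}$, the ascending link the full subgraph on $\{v^-\}$. Assume the link has girth at least $4$ and the ascending and descending links are trees. For an oriented edge $(a^+,b^+)$ of the descending link there is a unique $e\in E\Psi$ with either $\lambda e=a,\partial_+e=b$ or $\lambda e=b,\partial_+e=a$; $C_{(a,b)}$ denotes $C_e$ oriented so that its boundary reads (vertex rim)$\cdot b a^{-1}$. For distinct $a,b\in V\Psi$, let $(a^+=v_0^+,\dots,v_k^+=b^+)$ be the unique simple path in the descending link; $\mathrm{Fan}(a,b)$ is obtained from the cells $C_{(v_{i-1},v_i)}$, $i=1,\dots,k$, by identifying the upper edges of consecutive cells labeled $v_i$. Its vertex rim is the product of the vertex rims of $C_{(v_0,v_1)},\dots,C_{(v_{k-1},v_k)}$ in order, and its edge rim is the corresponding product of their edge rims. *)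

theory Defs
  imports Main
begin

(* ---------- LOG presentation data ----------
   The directed graph Psi has vertex type 'v and edge type 'e;
   src e = \<partial>_- e, tgt e = \<partial>_+ e, lab e = \<lambda> e. *)

(* ---------- Words in a free group ----------
   A word is a list of letters (x, True) = x, (x, False) = x^-1. *)
definition reduced_word :: "('x \<times> bool) list \<Rightarrow> bool" where
  "reduced_word w \<longleftrightarrow>
     (\<forall>i. Suc i < length w \<longrightarrow>
        \<not> (fst (w ! i) = fst (w ! Suc i) \<and> snd (w ! i) \<noteq> snd (w ! Suc i)))"

definition connects :: "('c \<Rightarrow> 'w \<times> 'w) \<Rightarrow> 'c \<Rightarrow> 'w \<Rightarrow> 'w \<Rightarrow> bool" where
  "connects ends c u w \<longleftrightarrow> ends c = (u, w) \<or> ends c = (w, u)"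

definition mg_walk :: "('c \<Rightarrow> 'w \<times> 'w) \<Rightarrow> 'c set \<Rightarrow> 'w list \<Rightarrow> bool" where
  "mg_walk ends F vs \<longleftrightarrow> vs \<noteq> [] \<and>
     (\<forall>i. Suc i < length vs \<longrightarrow> (\<exists>c\<in>F. connects ends c (vs ! i) (vs ! Suc i)))"

(* a cycle of length n = length vs: distinct vertices, distinct edges, edge i joins v_i and v_{i+1 mod n};
   length 1 = loop, length 2 = pair of parallel edges *)
definition mg_cycle :: "('c \<Rightarrow> 'w \<times> 'w) \<Rightarrow> 'c set \<Rightarrow> 'w list \<Rightarrow> 'c list \<Rightarrow> bool" where
  "mg_cycle ends F vs cs \<longleftrightarrow> vs \<noteq> [] \<and> length cs = length vs \<and> distinct vs \<and> distinct cs \<and>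
     set cs \<subseteq> F \<and>
     (\<forall>i < length vs. connects ends (cs ! i) (vs ! i) (vs ! ((Suc i) mod length vs)))"

definition girth_ge4 :: "('c \<Rightarrow> 'w \<times> 'w) \<Rightarrow> bool" where
  "girth_ge4 ends \<longleftrightarrow> (\<forall>vs cs. mg_cycle ends UNIV vs cs \<longrightarrow> 4 \<le> length vs)"

definition full_edges :: "('c \<Rightarrow> 'w \<times> 'w) \<Rightarrow> 'w set \<Rightarrow> 'c set" where
  "full_edges ends W = {c. fst (ends c) \<in> W \<and> snd (ends c) \<in> W}"

definition mg_full_tree :: "('c \<Rightarrow> 'w \<times> 'w) \<Rightarrow> 'w set \<Rightarrow> bool" where
  "mg_full_tree ends W \<longleftrightarrow> W \<noteq> {} \<and>
     (\<forall>u\<in>W. \<forall>w\<in>W. \<exists>vs. mg_walk ends (full_edges ends W) vs \<and> hd vs = u \<and> last vs = w) \<and>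
     (\<forall>vs cs. \<not> mg_cycle ends (full_edges ends W) vs cs)"

(* ---------- The square cell C_e ----------
   Corners P0 (bottom), P1, P2 (top), P3; sides
   S0 : P0 -> P1 labelled lab e,  S1 : P1 -> P2 labelled tgt e,
   S2 : P3 -> P2 labelled lab e,  S3 : P0 -> P3 labelled src e,
   so that the boundary read from P0 is (lab e)(tgt e)(lab e)^-1(src e)^-1. *)
datatype side = S0 | S1 | S2 | S3
datatype corner = P0 | P1 | P2 | P3

fun side_label :: "('e \<Rightarrow> 'v) \<Rightarrow> ('e \<Rightarrow> 'v) \<Rightarrow> ('e \<Rightarrow> 'v) \<Rightarrow> 'e \<Rightarrow> side \<Rightarrow> 'v" where
  "side_label src tgt lab e S0 = lab e"
| "side_label src tgt lab e S1 = tgt e"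
| "side_label src tgt lab e S2 = lab e"
| "side_label src tgt lab e S3 = src e"

fun side_head :: "side \<Rightarrow> corner" where
  "side_head S0 = P1"
| "side_head S1 = P2"
| "side_head S2 = P2"
| "side_head S3 = P3"

fun corner_sides :: "corner \<Rightarrow> side \<times> side" where
  "corner_sides P0 = (S0, S3)"
| "corner_sides P1 = (S0, S1)"
| "corner_sides P2 = (S1, S2)"
| "corner_sides P3 = (S2, S3)"

(* ---------- The link Lk(star, P(Psi,lambda)) ----------
   vertices (v, True) = v^+, (v, False) = v^-; one edge for each corner of each cell;
   the corner q of C_e joins (label f)^{eps1} and (label g)^{eps2}, f,g the sides at q,
   eps = + iff q is the terminal endpoint of the side. *)
definition lk_ends :: "('e \<Rightarrow> 'v) \<Rightarrow> ('e \<Rightarrow> 'v) \<Rightarrow> ('e \<Rightarrow> 'v) \<Rightarrow> 'e \<times> corner \<Rightarrow> ('v \<times> bool) \<times> ('v \<times> bool)" where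
  "lk_ends src tgt lab ec = (case ec of (e, q) \<Rightarrow>
     (case corner_sides q of (f, g) \<Rightarrow>
       ((side_label src tgt lab e f, side_head f = q), (side_label src tgt lab e g, side_head g = q))))"

definition desc_vertices :: "('v \<times> bool) set" where "desc_vertices = {w. snd w}"
definition asc_vertices :: "('v \<times> bool) set" where "asc_vertices = {w. \<not> snd w}"

definition desc_spath :: "('e \<Rightarrow> 'v) \<Rightarrow> ('e \<Rightarrow> 'v) \<Rightarrow> ('e \<Rightarrow> 'v) \<Rightarrow> 'v \<Rightarrow> 'v \<Rightarrow> 'v list \<Rightarrow> bool" where
  "desc_spath src tgt lab a b ps \<longleftrightarrow> ps \<noteq> [] \<and> distinct ps \<and> hd ps = a \<and> last ps = b \<and>
     mg_walk (lk_ends src tgt lab) (full_edges (lk_ends src tgt lab) desc_vertices)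
             (map (\<lambda>v. (v, True)) ps)"

definition desc_path :: "('e \<Rightarrow> 'v) \<Rightarrow> ('e \<Rightarrow> 'v) \<Rightarrow> ('e \<Rightarrow> 'v) \<Rightarrow> 'v \<Rightarrow> 'v \<Rightarrow> 'v list" where
  "desc_path src tgt lab a b = (THE ps. desc_spath src tgt lab a b ps)"

(* ---------- Oriented cells and rims ----------
   orientation True = C_e^+, False = C_e^- *)
fun bd_word :: "('e \<Rightarrow> 'v) \<Rightarrow> ('e \<Rightarrow> 'v) \<Rightarrow> ('e \<Rightarrow> 'v) \<Rightarrow> 'e \<Rightarrow> bool \<Rightarrow> ('v \<times> bool) list" where
  "bd_word src tgt lab e True = [(lab e, True), (tgt e, True), (lab e, False), (src e, False)]"
| "bd_word src tgt lab e False = [(src e, True), (lab e, True), (tgt e, False), (lab e, False)]"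

fun vrim_cell :: "('e \<Rightarrow> 'v) \<Rightarrow> ('e \<Rightarrow> 'v) \<Rightarrow> ('e \<Rightarrow> 'v) \<Rightarrow> 'e \<Rightarrow> bool \<Rightarrow> ('v \<times> bool) list" where
  "vrim_cell src tgt lab e True = [(src e, False), (lab e, True)]"
| "vrim_cell src tgt lab e False = [(lab e, False), (src e, True)]"

(* edge rim x_e^{+-1} as a letter in the alphabet {x_e}, indexed by e *)
fun erim_cell :: "'e \<Rightarrow> bool \<Rightarrow> ('e \<times> bool) list" where
  "erim_cell e s = [(e, s)]"

(* the unique e realising the descending-link edge (a^+, b^+) *)
definition cell_edge :: "('e \<Rightarrow> 'v) \<Rightarrow> ('e \<Rightarrow> 'v) \<Rightarrow> ('e \<Rightarrow> 'v) \<Rightarrow> 'v \<Rightarrow> 'v \<Rightarrow> 'e" where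
  "cell_edge src tgt lab a b = (THE e. (lab e = a \<and> tgt e = b) \<or> (lab e = b \<and> tgt e = a))"

definition cell_orient :: "('e \<Rightarrow> 'v) \<Rightarrow> ('e \<Rightarrow> 'v) \<Rightarrow> ('e \<Rightarrow> 'v) \<Rightarrow> 'v \<Rightarrow> 'v \<Rightarrow> bool" where
  "cell_orient src tgt lab a b = (THE s. \<exists>n.
      rotate n (bd_word src tgt lab (cell_edge src tgt lab a b) s)
        = vrim_cell src tgt lab (cell_edge src tgt lab a b) s @ [(b, True), (a, False)])"

definition fan_vrim :: "('e \<Rightarrow> 'v) \<Rightarrow> ('e \<Rightarrow> 'v) \<Rightarrow> ('e \<Rightarrow> 'v) \<Rightarrow> 'v \<Rightarrow> 'v \<Rightarrow> ('v \<times> bool) list" where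
  "fan_vrim src tgt lab a b = (let ps = desc_path src tgt lab a b in
     concat (map (\<lambda>(u, w). vrim_cell src tgt lab (cell_edge src tgt lab u w) (cell_orient src tgt lab u w))
                 (zip ps (tl ps))))"

definition fan_erim :: "('e \<Rightarrow> 'v) \<Rightarrow> ('e \<Rightarrow> 'v) \<Rightarrow> ('e \<Rightarrow> 'v) \<Rightarrow> 'v \<Rightarrow> 'v \<Rightarrow> ('e \<times> bool) list" where
  "fan_erim src tgt lab a b = (let ps = desc_path src tgt lab a b in
     concat (map (\<lambda>(u, w). erim_cell (cell_edge src tgt lab u w) (cell_orient src tgt lab u w))
                 (zip ps (tl ps))))"

end

theory Submission
  imports Defs
begin


definition adjR :: "('c \<Rightarrow> 'w \<times> 'w) \<Rightarrow> 'c set \<Rightarrow> 'w \<Rightarrow> 'w \<Rightarrow> bool" where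
  "adjR ends F x y \<longleftrightarrow> (\<exists>c\<in>F. connects ends c x y)"

lemma adjR_sym: "adjR ends F x y \<Longrightarrow> adjR ends F y x"
  unfolding adjR_def connects_def by blast

lemma mg_walk_succ: "mg_walk ends F vs \<longleftrightarrow> vs \<noteq> [] \<and> successively (adjR ends F) vs"
  unfolding mg_walk_def successively_conv_nth adjR_def by blast

lemma nth_snoc_hd: "i < length vs \<Longrightarrow> (vs @ [hd vs]) ! Suc i = vs ! (Suc i mod length vs)"
proof (cases "Suc i < length vs")
  case True thus ?thesis by (simp add: nth_append)
next
  case False
  assume "i < length vs"
  hence "Suc i = length vs" using False by simp
  moreover have "vs \<noteq> []" using \<open>i < length vs\<close> by auto
  ultimately show ?thesis by (simp add: nth_append hd_conv_nth)
qed

lemma cycle_from_list: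
  assumes "distinct vs" "length vs \<ge> 3" "successively (adjR ends F) (vs @ [hd vs])"
  shows "\<exists>cs. mg_cycle ends F vs cs"
proof -
  define n where "n = length vs"
  have R: "\<exists>c. c \<in> F \<and> connects ends c (vs!i) (vs!(Suc i mod n))" if "i < n" for i
  proof -
    have "adjR ends F ((vs @ [hd vs]) ! i) ((vs @ [hd vs]) ! Suc i)"
      using successively_nth[OF assms(3), of i] that n_def by simp
    moreover have "(vs @ [hd vs]) ! i = vs ! i" using that n_def by (simp add: nth_append)
    ultimately show ?thesis using nth_snoc_hd[of i vs] that n_def unfolding adjR_def by auto
  qed
  define cs where "cs = map (\<lambda>i. SOME c. c \<in> F \<and> connects ends c (vs!i) (vs!(Suc i mod n))) [0..<n]"
  have C: "cs ! i \<in> F \<and> connects ends (cs ! i) (vs!i) (vs!(Suc i mod n))" if "i < n" for i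
    using someI_ex[OF R[OF that]] that by (simp add: cs_def)
  have D: "distinct cs"
  proof (clarsimp simp: distinct_conv_nth)
    fix i j assume ij: "i < length cs" "j < length cs" "i \<noteq> j" "cs ! i = cs ! j"
    hence ii: "i < n" "j < n" by (auto simp: cs_def)
    have m1: "Suc i mod n < n" "Suc j mod n < n" using ii by auto
    from C[OF ii(1)] C[OF ii(2)] ij(4)
    have "(vs!i = vs!j \<and> vs!(Suc i mod n) = vs!(Suc j mod n)) \<or>
          (vs!i = vs!(Suc j mod n) \<and> vs!(Suc i mod n) = vs!j)"
      unfolding connects_def by auto
    hence "i = Suc j mod n \<and> Suc i mod n = j"
      using ij(3) ii m1 assms(1) n_def by (metis nth_eq_iff_index_eq)
    hence e1: "i = Suc j mod n" and e2: "Suc i mod n = j" by auto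
    have n3: "n \<ge> 3" using assms(2) n_def by simp
    show False
    proof (cases "Suc j < n")
      case True
      hence "i = Suc j" using e1 by simp
      show False
      proof (cases "Suc i < n")
        case True thus False using e2 \<open>i = Suc j\<close> by simp
      next
        case False
        hence "Suc i = n" using ii by simp
        thus False using e2 n3 \<open>i = Suc j\<close> by simp
      qed
    next
      case False
      hence "Suc j = n" using ii by simp
      hence "i = 0" using e1 by simp
      thus False using e2 n3 \<open>Suc j = n\<close> by simp
    qed
  qed
  have L: "length cs = n" by (simp add: cs_def)
  have "set cs \<subseteq> F" using C L by (auto simp: in_set_conv_nth)
  moreover have "vs \<noteq> []" using assms(2) by auto
  ultimately have "mg_cycle ends F vs cs"
    unfolding mg_cycle_def using C D L n_def assms(1) by simp
  thus ?thesis by blast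
qed

lemma simple_path_exists:
  "successively R vs \<Longrightarrow> vs \<noteq> [] \<Longrightarrow> \<exists>ps. ps \<noteq> [] \<and> distinct ps \<and> hd ps = hd vs \<and>
     last ps = last vs \<and> successively R ps \<and> set ps \<subseteq> set vs"
proof (induction vs)
  case Nil thus ?case by simp
next
  case (Cons v rest)
  show ?case
  proof (cases "rest = []")
    case True thus ?thesis by (intro exI[of _ "[v]"]) auto
  next
    case False
    with Cons obtain ps where ps: "ps \<noteq> []" "distinct ps" "hd ps = hd rest" "last ps = last rest"
      "successively R ps" "set ps \<subseteq> set rest" by (auto simp: successively_Cons)
    show ?thesis
    proof (cases "v \<in> set ps")
      case True
      then obtain xs ys where sp: "ps = xs @ v # ys" by (meson split_list)
      have d: "distinct (v # ys)" using ps(2) sp by simp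
      have l: "last (v # ys) = last rest" using ps(4) sp by (simp add: last_append)
      have sc: "successively R (v # ys)" using ps(5) sp by (simp add: successively_append_iff)
      have st: "set (v # ys) \<subseteq> set (v # rest)" using ps(6) sp by auto
      show ?thesis using d l sc st False
        by (intro exI[of _ "v # ys"]) simp
    next
      case f2: False
      have "R v (hd ps)" using Cons.prems False ps(3) by (cases rest) auto
      thus ?thesis using ps f2 False
        by (intro exI[of _ "v # ps"]) (auto simp: successively_Cons)
    qed
  qed
qed

lemma path_unique:
  assumes nocyc: "\<forall>vs cs. \<not> mg_cycle ends F vs cs"
  shows "p \<noteq> [] \<Longrightarrow> q \<noteq> [] \<Longrightarrow> distinct p \<Longrightarrow> distinct q \<Longrightarrow> successively (adjR ends F) p \<Longrightarrow>
     successively (adjR ends F) q \<Longrightarrow> hd p = hd q \<Longrightarrow> last p = last q \<Longrightarrow> p = q"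
proof (induction p arbitrary: q)
  case Nil thus ?case by simp
next
  case (Cons a p')
  obtain q' where q: "q = a # q'" using Cons.prems by (cases q) auto
  show ?case
  proof (cases "p' = [] \<or> q' = []")
    case True
    have "p' = [] \<and> q' = []"
    proof (cases "p' = []")
      case True
      hence "last q = a" using Cons.prems by simp
      hence "q' = []" using Cons.prems(4) q by (metis distinct.simps(2) last.simps last_in_set)
      thus ?thesis using True by simp
    next
      case False
      hence "q' = []" using \<open>p' = [] \<or> q' = []\<close> by simp
      hence "last (a # p') = a" using Cons.prems q by simp
      hence "p' = []" using Cons.prems(3) by (metis distinct.simps(2) last.simps last_in_set)
      thus ?thesis using False by simp
    qed
    thus ?thesis using q by simp
  next
    case False
    hence ne: "p' \<noteq> []" "q' \<noteq> []" by auto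
    show ?thesis
    proof (cases "hd p' = hd q'")
      case True
      have "p' = q'"
        using Cons.IH[of q'] Cons.prems q ne True by (auto simp: successively_Cons)
      thus ?thesis using q by simp
    next
      case hne: False
      have "last p' \<in> set q'" using Cons.prems q ne by (simp add: last_in_set)
      hence "\<exists>x\<in>set p'. x \<in> set q'" using ne by (auto simp: last_in_set)
      then obtain xs y ys where sp: "p' = xs @ y # ys" "y \<in> set q'" "\<forall>x\<in>set xs. x \<notin> set q'"
        by (auto dest!: split_list_first_prop)
      then obtain zs ws where sq: "q' = zs @ y # ws" by (meson split_list)
      define vs where "vs = a # xs @ y # rev zs"
      have dp: "distinct (a # xs @ y # ys)" using Cons.prems(3) sp by simp
      have dq: "distinct (a # zs @ y # ws)" using Cons.prems(4) q sq by simp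
      have dj: "set xs \<inter> set zs = {}" using sp(3) sq by auto
      have d: "distinct vs" unfolding vs_def using dp dq dj by auto
      have l: "length vs \<ge> 3"
      proof (rule ccontr)
        assume "\<not> ?thesis"
        hence "xs = [] \<and> zs = []" unfolding vs_def by (cases xs; cases zs) auto
        thus False using hne sp sq by auto
      qed
      have s1: "successively (adjR ends F) (a # xs @ [y])"
      proof -
        have "successively (adjR ends F) ((a # xs @ [y]) @ ys)" using Cons.prems(5) sp by simp
        thus ?thesis by (simp only: successively_append_iff)
      qed
      have "successively (adjR ends F) (a # zs @ [y])"
      proof -
        have "successively (adjR ends F) ((a # zs @ [y]) @ ws)" using Cons.prems(6) q sq by simp
        thus ?thesis by (simp only: successively_append_iff)
      qed
      hence "successively (\<lambda>x y. adjR ends F y x) (a # zs @ [y])"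
        by (rule successively_mono) (rule adjR_sym)
      hence "successively (adjR ends F) (rev (a # zs @ [y]))" by (simp only: successively_rev)
      hence s2: "successively (adjR ends F) (y # rev zs @ [a])" by simp
      have "successively (adjR ends F) ((a # xs) @ (y # rev zs @ [a]))"
      proof -
        have "successively (adjR ends F) ((a # xs) @ [y])" using s1 by simp
        hence "successively (adjR ends F) (a # xs) \<and> adjR ends F (last (a # xs)) y"
          unfolding successively_append_iff by simp
        thus ?thesis using s2 unfolding successively_append_iff by simp
      qed
      hence "successively (adjR ends F) (vs @ [hd vs])" unfolding vs_def by simp
      thus ?thesis using cycle_from_list[OF d l] nocyc by blast
    qed
  qed
qed



lemma lk_vals:
  "lk_ends src tgt lab (e, P0) = ((lab e, False), (src e, False))"
  "lk_ends src tgt lab (e, P1) = ((lab e, True), (tgt e, False))"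
  "lk_ends src tgt lab (e, P2) = ((tgt e, True), (lab e, True))"
  "lk_ends src tgt lab (e, P3) = ((lab e, False), (src e, True))"
  by (simp_all add: lk_ends_def)

lemma rot4: "rotate n [a,b,c,d] = [a,b,c,d] \<or> rotate n [a,b,c,d] = [b,c,d,a] \<or>
   rotate n [a,b,c,d] = [c,d,a,b] \<or> rotate n [a,b,c,d] = [d,a,b,c]"
proof -
  have e: "rotate n [a,b,c,d] = rotate (n mod 4) [a,b,c,d]" using rotate_conv_mod[of n "[a,b,c,d]"] by simp
  have "n mod 4 = 0 \<or> n mod 4 = Suc 0 \<or> n mod 4 = Suc (Suc 0) \<or> n mod 4 = Suc (Suc (Suc 0))" by arith
  thus ?thesis unfolding e by (elim disjE) simp_all
qed

definition pe :: "('e \<Rightarrow> 'v) \<Rightarrow> ('e \<Rightarrow> 'v) \<Rightarrow> 'v \<Rightarrow> 'v \<Rightarrow> 'e \<Rightarrow> bool" where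
  "pe tgt lab u w e \<longleftrightarrow> (lab e = u \<and> tgt e = w) \<or> (lab e = w \<and> tgt e = u)"

lemma rotT: "(\<exists>n. rotate n (bd_word src tgt lab e True) = vrim_cell src tgt lab e True @ [(w,True),(u,False)])
   \<longleftrightarrow> (lab e = u \<and> tgt e = w)"
proof
  assume "\<exists>n. rotate n (bd_word src tgt lab e True) = vrim_cell src tgt lab e True @ [(w,True),(u,False)]"
  then obtain n where "rotate n [(lab e, True), (tgt e, True), (lab e, False), (src e, False)]
     = [(src e, False), (lab e, True), (w,True),(u,False)]" by auto
  thus "lab e = u \<and> tgt e = w" using rot4[of n "(lab e, True)" "(tgt e, True)" "(lab e, False)" "(src e, False)"]
    by auto
next
  assume "lab e = u \<and> tgt e = w"
  thus "\<exists>n. rotate n (bd_word src tgt lab e True) = vrim_cell src tgt lab e True @ [(w,True),(u,False)]"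
    by (intro exI[of _ "Suc (Suc (Suc 0))"]) simp
qed

lemma rotF: "(\<exists>n. rotate n (bd_word src tgt lab e False) = vrim_cell src tgt lab e False @ [(w,True),(u,False)])
   \<longleftrightarrow> (lab e = w \<and> tgt e = u)"
proof
  assume "\<exists>n. rotate n (bd_word src tgt lab e False) = vrim_cell src tgt lab e False @ [(w,True),(u,False)]"
  then obtain n where "rotate n [(src e, True), (lab e, True), (tgt e, False), (lab e, False)]
     = [(lab e, False), (src e, True), (w,True),(u,False)]" by auto
  thus "lab e = w \<and> tgt e = u" using rot4[of n "(src e, True)" "(lab e, True)" "(tgt e, False)" "(lab e, False)"]
    by auto
next
  assume "lab e = w \<and> tgt e = u"
  thus "\<exists>n. rotate n (bd_word src tgt lab e False) = vrim_cell src tgt lab e False @ [(w,True),(u,False)]"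
    by (intro exI[of _ "Suc (Suc (Suc 0))"]) simp
qed

lemma succ_concat_pairs:
  assumes "\<And>u w. D u w \<Longrightarrow> g u w \<noteq> []"
    "\<And>u w. D u w \<Longrightarrow> successively P (g u w)"
    "\<And>u w z. D u w \<Longrightarrow> D w z \<Longrightarrow> u \<noteq> z \<Longrightarrow> P (last (g u w)) (hd (g w z))"
  shows "successively D ps \<Longrightarrow> distinct ps \<Longrightarrow>
     successively P (concat (map (\<lambda>(u,w). g u w) (zip ps (tl ps))))"
proof (induction ps rule: induct_list012)
  case 1 thus ?case by simp
next
  case (2 x) thus ?case by simp
next
  case (3 x y zs)
  have IH: "successively P (concat (map (\<lambda>(u,w). g u w) (zip (y # zs) zs)))"
    using 3 by (simp add: successively_Cons)
  have Dxy: "D x y" using 3 by simp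
  show ?case
  proof (cases zs)
    case Nil thus ?thesis using assms(2)[OF Dxy] by simp
  next
    case (Cons z zs')
    have Dyz: "D y z" using 3 Cons by simp
    have xz: "x \<noteq> z" using 3 Cons by simp
    have h: "hd (concat (map (\<lambda>(u,w). g u w) (zip (y # zs) zs))) = hd (g y z)"
      using Cons assms(1)[OF Dyz] by simp
    have "successively P (g x y @ concat (map (\<lambda>(u,w). g u w) (zip (y # zs) zs)))"
      unfolding successively_append_iff
      using IH h assms(2)[OF Dxy] assms(3)[OF Dxy Dyz xz] by simp
    thus ?thesis by simp
  qed
qed


lemma reduced_word_succ: "reduced_word w \<longleftrightarrow> successively (\<lambda>x y. \<not> (fst x = fst y \<and> snd x \<noteq> snd y)) w"
  unfolding reduced_word_def successively_conv_nth by blast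

context
  fixes src tgt lab :: "'e \<Rightarrow> 'v"
  assumes girth: "girth_ge4 (lk_ends src tgt lab)"
begin

lemma no_loop: "\<not> connects (lk_ends src tgt lab) c x x"
proof
  assume "connects (lk_ends src tgt lab) c x x"
  hence "mg_cycle (lk_ends src tgt lab) UNIV [x] [c]" unfolding mg_cycle_def by simp
  thus False using girth unfolding girth_ge4_def by fastforce
qed

lemma no_double:
  assumes "c \<noteq> d" "x \<noteq> y" "connects (lk_ends src tgt lab) c x y" "connects (lk_ends src tgt lab) d x y"
  shows False
proof -
  have "connects (lk_ends src tgt lab) d y x" using assms(4) unfolding connects_def by auto
  hence "mg_cycle (lk_ends src tgt lab) UNIV [x,y] [c,d]"
    unfolding mg_cycle_def using assms by (auto simp: less_Suc_eq)
  thus False using girth unfolding girth_ge4_def by fastforce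
qed

lemma lab_src: "lab e \<noteq> src e"
  using no_loop[of "(e, P0)" "(lab e, False)"] by (auto simp: lk_vals connects_def)

lemma lab_tgt: "lab e \<noteq> tgt e"
  using no_loop[of "(e, P2)" "(lab e, True)"] by (auto simp: lk_vals connects_def)

abbreviation D where "D u w \<equiv> adjR (lk_ends src tgt lab) (full_edges (lk_ends src tgt lab) desc_vertices) (u, True) (w, True)"

lemma D_pe: assumes "D u w" shows "\<exists>e. pe tgt lab u w e"
proof -
  obtain c where c: "c \<in> full_edges (lk_ends src tgt lab) desc_vertices" "connects (lk_ends src tgt lab) c (u, True) (w, True)"
    using assms unfolding adjR_def by blast
  obtain e q where cq: "c = (e, q)" by (cases c)
  show ?thesis using c unfolding cq
    by (cases q) (auto simp: lk_vals full_edges_def desc_vertices_def connects_def pe_def)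
qed

lemma pe_ne: "pe tgt lab u w e \<Longrightarrow> u \<noteq> w"
  using lab_tgt[of e] unfolding pe_def by auto

lemma pe_unique: assumes "pe tgt lab u w e" "pe tgt lab u w e'" shows "e = e'"
proof (rule ccontr)
  assume ne: "e \<noteq> e'"
  have "u \<noteq> w" using pe_ne assms(1) .
  show False
    apply (rule no_double[of "(e, P2)" "(e', P2)" "(u, True)" "(w, True)"])
    using ne \<open>u \<noteq> w\<close> assms by (auto simp: lk_vals connects_def pe_def)
qed

lemma cell_edge_eq: "pe tgt lab u w e \<Longrightarrow> cell_edge src tgt lab u w = e"
  unfolding cell_edge_def
  by (rule the_equality) (auto simp: pe_def intro: pe_unique)

lemma cell_orient_eq: assumes "pe tgt lab u w e" shows "cell_orient src tgt lab u w = (lab e = u)"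
proof -
  have uw: "u \<noteq> w" using pe_ne assms .
  show ?thesis unfolding cell_orient_def cell_edge_eq[OF assms]
  proof (rule the_equality)
    show "\<exists>n. rotate n (bd_word src tgt lab e (lab e = u)) = vrim_cell src tgt lab e (lab e = u) @ [(w, True), (u, False)]"
    proof (cases "lab e = u")
      case True thus ?thesis using assms uw rotT[of src tgt lab e w u] by (auto simp: pe_def)
    next
      case False thus ?thesis using assms uw rotF[of src tgt lab e w u] by (auto simp: pe_def)
    qed
  next
    fix s assume "\<exists>n. rotate n (bd_word src tgt lab e s) = vrim_cell src tgt lab e s @ [(w, True), (u, False)]"
    thus "s = (lab e = u)" using uw rotT[of src tgt lab e w u] rotF[of src tgt lab e w u]
      by (cases s) auto
  qed
qed

lemma vrim_pair: assumes "pe tgt lab u w e"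
  shows "vrim_cell src tgt lab (cell_edge src tgt lab u w) (cell_orient src tgt lab u w) =
    (if lab e = u then [(src e, False), (u, True)] else [(w, False), (src e, True)])"
  using assms cell_edge_eq[OF assms] cell_orient_eq[OF assms] by (auto simp: pe_def)

lemma vrim_reduced:
  assumes "successively D ps" "distinct ps"
  shows "reduced_word (concat (map (\<lambda>(u,w). vrim_cell src tgt lab (cell_edge src tgt lab u w) (cell_orient src tgt lab u w)) (zip ps (tl ps))))"
  unfolding reduced_word_succ
proof (rule succ_concat_pairs[OF _ _ _ assms])
  fix u w show "vrim_cell src tgt lab (cell_edge src tgt lab u w) (cell_orient src tgt lab u w) \<noteq> []"
    by (cases "cell_orient src tgt lab u w") simp_all
next
  fix u w assume "D u w"
  then obtain e where e: "pe tgt lab u w e" using D_pe by blast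
  show "successively (\<lambda>x y. \<not> (fst x = fst y \<and> snd x \<noteq> snd y))
          (vrim_cell src tgt lab (cell_edge src tgt lab u w) (cell_orient src tgt lab u w))"
    unfolding vrim_pair[OF e] using lab_src[of e] e by (auto simp: pe_def)
next
  fix u w z assume Duw: "D u w" and Dwz: "D w z" and uz: "u \<noteq> z"
  obtain e where e: "pe tgt lab u w e" using D_pe Duw by blast
  obtain e' where e': "pe tgt lab w z e'" using D_pe Dwz by blast
  have uw: "u \<noteq> w" using pe_ne e .
  have wz: "w \<noteq> z" using pe_ne e' .
  show "\<not> (fst (last (vrim_cell src tgt lab (cell_edge src tgt lab u w) (cell_orient src tgt lab u w))) =
            fst (hd (vrim_cell src tgt lab (cell_edge src tgt lab w z) (cell_orient src tgt lab w z))) \<and>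
          snd (last (vrim_cell src tgt lab (cell_edge src tgt lab u w) (cell_orient src tgt lab u w))) \<noteq>
            snd (hd (vrim_cell src tgt lab (cell_edge src tgt lab w z) (cell_orient src tgt lab w z))))"
  proof (cases "lab e = u"; cases "lab e' = w")
    assume A: "lab e = u" "lab e' = w"
    hence t: "tgt e = w" "tgt e' = z" using e e' uw wz by (auto simp: pe_def)
    have "u \<noteq> src e'"
    proof
      assume "u = src e'"
      show False
        apply (rule no_double[of "(e, P1)" "(e', P3)" "(u, True)" "(w, False)"])
        using A t \<open>u = src e'\<close> by (auto simp: lk_vals connects_def)
    qed
    thus ?thesis using A vrim_pair[OF e] vrim_pair[OF e'] by simp
  next
    assume A: "lab e = u" "lab e' \<noteq> w"
    hence "lab e' = z" using e' by (auto simp: pe_def)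
    thus ?thesis using A uz vrim_pair[OF e] vrim_pair[OF e'] by simp
  next
    assume A: "lab e \<noteq> u" "lab e' = w"
    hence t: "lab e = w" "tgt e = u" "tgt e' = z" using e e' uw wz by (auto simp: pe_def)
    have "src e \<noteq> src e'"
    proof
      assume se: "src e = src e'"
      have "e \<noteq> e'" using t uz by auto
      show False
        apply (rule no_double[of "(e, P0)" "(e', P0)" "(w, False)" "(src e, False)"])
        using A t se \<open>e \<noteq> e'\<close> lab_src[of e] by (auto simp: lk_vals connects_def)
    qed
    thus ?thesis using A vrim_pair[OF e] vrim_pair[OF e'] by simp
  next
    assume A: "lab e \<noteq> u" "lab e' \<noteq> w"
    hence t: "lab e = w" "tgt e = u" "lab e' = z" "tgt e' = w" using e e' by (auto simp: pe_def)
    have "src e \<noteq> z"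
    proof
      assume se: "src e = z"
      show False
        apply (rule no_double[of "(e, P3)" "(e', P1)" "(w, False)" "(z, True)"])
        using A t se by (auto simp: lk_vals connects_def)
    qed
    thus ?thesis using A vrim_pair[OF e] vrim_pair[OF e'] by simp
  qed
qed

lemma erim_reduced:
  assumes "successively D ps" "distinct ps"
  shows "reduced_word (concat (map (\<lambda>(u,w). erim_cell (cell_edge src tgt lab u w) (cell_orient src tgt lab u w)) (zip ps (tl ps))))"
  unfolding reduced_word_succ
proof (rule succ_concat_pairs[OF _ _ _ assms])
  fix u w show "erim_cell (cell_edge src tgt lab u w) (cell_orient src tgt lab u w) \<noteq> []" by simp
next
  fix u w show "successively (\<lambda>x y. \<not> (fst x = fst y \<and> snd x \<noteq> snd y))
          (erim_cell (cell_edge src tgt lab u w) (cell_orient src tgt lab u w))" by simp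
next
  fix u w z assume Duw: "D u w" and Dwz: "D w z" and uz: "u \<noteq> z"
  obtain e where e: "pe tgt lab u w e" using D_pe Duw by blast
  obtain e' where e': "pe tgt lab w z e'" using D_pe Dwz by blast
  have uw: "u \<noteq> w" using pe_ne e .
  have wz: "w \<noteq> z" using pe_ne e' .
  have "e \<noteq> e'" using e e' uw wz uz by (auto simp: pe_def)
  thus "\<not> (fst (last (erim_cell (cell_edge src tgt lab u w) (cell_orient src tgt lab u w))) =
            fst (hd (erim_cell (cell_edge src tgt lab w z) (cell_orient src tgt lab w z))) \<and>
          snd (last (erim_cell (cell_edge src tgt lab u w) (cell_orient src tgt lab u w))) \<noteq>
            snd (hd (erim_cell (cell_edge src tgt lab w z) (cell_orient src tgt lab w z))))"
    using cell_edge_eq[OF e] cell_edge_eq[OF e'] by simp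
qed

end



lemma adj_snd:
  assumes "successively (adjR (lk_ends src tgt lab) (full_edges (lk_ends src tgt lab) desc_vertices)) xs"
    "Suc 0 < length xs" "x \<in> set xs"
  shows "snd x"
proof -
  have A: "snd x \<and> snd y" if "adjR (lk_ends src tgt lab) (full_edges (lk_ends src tgt lab) desc_vertices) x y" for x y
    using that unfolding adjR_def full_edges_def desc_vertices_def connects_def by (auto simp: prod_eq_iff)
  obtain i where i: "i < length xs" "x = xs ! i" using assms(3) by (auto simp: in_set_conv_nth)
  show ?thesis
  proof (cases "Suc i < length xs")
    case True thus ?thesis using A successively_nth[OF assms(1) True] i by blast
  next
    case False
    hence "Suc (i - 1) < length xs" "Suc (i - 1) = i" using i assms(2) by auto
    thus ?thesis using A successively_nth[OF assms(1) \<open>Suc (i - 1) < length xs\<close>] i by metis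
  qed
qed

lemma desc_spath_exists:
  assumes tree: "mg_full_tree (lk_ends src tgt lab) desc_vertices" and ab: "a \<noteq> b"
  shows "\<exists>ps. desc_spath src tgt lab a b ps"
proof -
  let ?lk = "lk_ends src tgt lab"
  let ?F = "full_edges ?lk desc_vertices"
  obtain vs where vs: "mg_walk ?lk ?F vs" "hd vs = (a, True)" "last vs = (b, True)"
    using tree unfolding mg_full_tree_def desc_vertices_def by force
  obtain ps' where ps': "ps' \<noteq> []" "distinct ps'" "hd ps' = (a, True)" "last ps' = (b, True)"
     "successively (adjR ?lk ?F) ps'"
    using simple_path_exists[of "adjR ?lk ?F" vs] vs unfolding mg_walk_succ by auto
  have len: "Suc 0 < length ps'"
  proof (rule ccontr)
    assume "\<not> ?thesis"
    hence "length ps' = 1" using ps'(1) by (cases ps') auto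
    hence "hd ps' = last ps'" by (cases ps') auto
    thus False using ps' ab by simp
  qed
  have sn: "\<And>x. x \<in> set ps' \<Longrightarrow> snd x" using adj_snd[OF ps'(5) len] .
  have m: "map (\<lambda>v. (v, True)) (map fst ps') = ps'"
  proof -
    have "map (\<lambda>v. (v, True)) (map fst ps') = map (\<lambda>x. (fst x, True)) ps'" by simp
    also have "\<dots> = ps'" by (rule map_idI) (use sn in \<open>auto simp: prod_eq_iff\<close>)
    finally show ?thesis .
  qed
  have "desc_spath src tgt lab a b (map fst ps')"
    unfolding desc_spath_def m mg_walk_succ
    using ps' by (auto simp: hd_map last_map distinct_map inj_on_def prod_eq_iff dest: sn)
  thus ?thesis by blast
qed

lemma desc_spath_unique:
  assumes tree: "mg_full_tree (lk_ends src tgt lab) desc_vertices"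
    and p: "desc_spath src tgt lab a b p" and q: "desc_spath src tgt lab a b q"
  shows "p = q"
proof -
  let ?lk = "lk_ends src tgt lab"
  let ?F = "full_edges ?lk desc_vertices"
  have nc: "\<forall>vs cs. \<not> mg_cycle ?lk ?F vs cs" using tree unfolding mg_full_tree_def by blast
  have inj: "inj (\<lambda>v. (v, True))" by (auto simp: inj_on_def)
  have "map (\<lambda>v. (v, True)) p = map (\<lambda>v. (v, True)) q"
    apply (rule path_unique[OF nc])
    using p q unfolding desc_spath_def mg_walk_succ
    by (auto simp: hd_map last_map distinct_map inj_on_def)
  thus ?thesis using inj by (metis inj_map_eq_map)
qed

theorem mainTheorem3:
  fixes src tgt lab :: "'e \<Rightarrow> 'v" and a b :: 'v
  assumes "girth_ge4 (lk_ends src tgt lab)"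
    and "mg_full_tree (lk_ends src tgt lab) desc_vertices"
    and "mg_full_tree (lk_ends src tgt lab) asc_vertices"
    and "a \<noteq> b"
  shows "reduced_word (fan_vrim src tgt lab a b) \<and> reduced_word (fan_erim src tgt lab a b)"
proof -
  have sp: "desc_spath src tgt lab a b (desc_path src tgt lab a b)"
    unfolding desc_path_def
    using desc_spath_exists[OF assms(2) assms(4)] desc_spath_unique[OF assms(2)]
    by (metis theI)
  define ps where "ps = desc_path src tgt lab a b"
  have d: "distinct ps" using sp unfolding ps_def desc_spath_def by simp
  have s: "successively (\<lambda>u w. adjR (lk_ends src tgt lab) (full_edges (lk_ends src tgt lab) desc_vertices) (u, True) (w, True)) ps"
    using sp unfolding ps_def desc_spath_def mg_walk_succ successively_map by simp
  show ?thesis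
    unfolding fan_vrim_def fan_erim_def Let_def ps_def[symmetric]
    using vrim_reduced[OF assms(1) s d] erim_reduced[OF assms(1) s d] by simp
qed

end
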